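(* Consider the Joint Randomized Response (JRR) mechanism described in the context, with parameters $0.5<p\le 1$, $q=1-p$ and $1-1/p\le\rho\le 1$, applied to $n$ contributors (with $n$ even) holding binary values $x_1,\dots,x_n\in\{0,1\}$. For $v\in\{0,1\}$ let $n_v$ be the number of contributors with $x_j=v$ and let $I_v$ be the number of reported values $y_j$ equal to $v$. Then the estimator $$\hat n_v=\frac{I_v-nq}{p-q}$$ is an unbiased estimator of $n_v$, i.e. $\mathrm{E}[\hat n_v]=n_v$, for each $v\in\{0,1\}$.
   Context: JRR mechanism: the $n$ contributors are partitioned uniformly at random into $n/2$ disjoint groups of two. In each group $\{u_a,u_b\}$ a pair of indicator variables $(T_a,T_b)\in\{0,1\}^2$ is drawn, independently across groups, with joint distribution $\Pr[T_a=1,T_b=1]=p^2+\rho pq$, $\Pr[T_a=1,T_b=0]=\Pr[T_a=0,T_b=1]=(1-\rho)pq$, $\Pr[T_a=0,T_b=0]=q^2+\rho pq$. Each contributor $u_j$ reports $y_j=x_j$ if $T_j=1$ and $y_j=1-x_j$ if $T_j=0$. *)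

theory Defs
  imports "HOL-Probability.Probability"
begin

definition pair_partitions :: "nat \<Rightarrow> nat set set set" where
  "pair_partitions n = {M. \<Union>M = {..<n} \<and> (\<forall>g\<in>M. card g = 2) \<and>
       (\<forall>g\<in>M. \<forall>h\<in>M. g \<noteq> h \<longrightarrow> g \<inter> h = {})}"

text \<open>Joint distribution of (T_a, T_b) in one group (True = 1, False = 0).\<close>
definition jrr_pair_pmf :: "real \<Rightarrow> real \<Rightarrow> (bool \<times> bool) pmf" where
  "jrr_pair_pmf p \<rho> = embed_pmf (\<lambda>(a, b).
     let q = 1 - p in
     if a \<and> b then p\<^sup>2 + \<rho> * p * q
     else if a \<noteq> b then (1 - \<rho>) * p * q
     else q\<^sup>2 + \<rho> * p * q)"

definition group_of :: "nat set set \<Rightarrow> nat \<Rightarrow> nat set" where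
  "group_of M j = (THE g. g \<in> M \<and> j \<in> g)"

text \<open>Distribution of the indicator vector T: uniform random pairing, then
  independent pair draws per group (first component goes to the smaller member;
  the pair distribution is symmetric, so this choice is immaterial).\<close>
definition jrr_T :: "nat \<Rightarrow> real \<Rightarrow> real \<Rightarrow> (nat \<Rightarrow> bool) pmf" where
  "jrr_T n p \<rho> =
     do { M \<leftarrow> pmf_of_set (pair_partitions n);
          G \<leftarrow> Pi_pmf M (False, False) (\<lambda>_. jrr_pair_pmf p \<rho>);
          return_pmf (\<lambda>j. let g = group_of M j in
                            if j = Min g then fst (G g) else snd (G g)) }"

definition jrr_report :: "(nat \<Rightarrow> nat) \<Rightarrow> (nat \<Rightarrow> bool) \<Rightarrow> nat \<Rightarrow> nat" where
  "jrr_report x T j = (if T j then x j else 1 - x j)"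

end

theory Submission imports Defs begin

lemma pair_pmf_pmf:
  assumes "1/2 < p" "p \<le> 1" "1 - 1/p \<le> \<rho>" "\<rho> \<le> 1"
  shows "pmf (jrr_pair_pmf p \<rho>) x = (case x of (a, b) \<Rightarrow>
     if a \<and> b then p\<^sup>2 + \<rho> * p * (1-p)
     else if a \<noteq> b then (1 - \<rho>) * p * (1-p)
     else (1-p)\<^sup>2 + \<rho> * p * (1-p))"
proof -
  define f where "f = (\<lambda>(a::bool, b::bool).
     let q = 1 - p in
     if a \<and> b then p\<^sup>2 + \<rho> * p * q
     else if a \<noteq> b then (1 - \<rho>) * p * q
     else q\<^sup>2 + \<rho> * p * q)"
  have p0: "p > 0" using assms by simp
  have r: "-(1-p)/p \<le> \<rho>" using assms(3) p0 by (simp add: field_simps)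
  hence r2: "-(1-p) \<le> \<rho> * p" using p0 by (simp add: field_simps)
  have q0: "1 - p \<ge> 0" using assms by simp
  have a1: "\<rho> * p * (1-p) \<ge> -((1-p)*(1-p))" using mult_right_mono[OF r2 q0] by (simp add: algebra_simps)
  have a2: "(1-p)*(1-p) \<le> p*p" proof -
    have "(1-p)*(1-p) = 1 - 2*p + p*p" by (simp add: algebra_simps)
    thus ?thesis using assms by linarith
  qed
  have nn0: "0 \<le> f (True, True)" "0 \<le> f (True, False)" "0 \<le> f (False, True)" "0 \<le> f (False, False)"
      using a1 a2 assms q0 p0 by (simp_all add: f_def Let_def power2_eq_square; linarith)+
  have nn: "\<And>x. 0 \<le> f x" using nn0 by (metis (full_types) prod.exhaust)
  have U: "(UNIV :: (bool \<times> bool) set) = {(True,True),(True,False),(False,True),(False,False)}"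
    by (auto intro: prod.exhaust)
  have sum: "(\<integral>\<^sup>+x. ennreal (f x) \<partial>count_space UNIV) = 1"
    apply (subst nn_integral_count_space_finite)
     apply simp
    apply (subst sum_ennreal)
    using nn apply simp
    apply (simp add: U f_def Let_def power2_eq_square algebra_simps)
    done
  show ?thesis unfolding jrr_pair_pmf_def
    using pmf_embed_pmf[OF nn sum, of x] by (simp add: f_def Let_def split: prod.splits)
qed

lemma pair_marg:
  assumes "1/2 < p" "p \<le> 1" "1 - 1/p \<le> \<rho>" "\<rho> \<le> 1"
  shows "map_pmf fst (jrr_pair_pmf p \<rho>) = bernoulli_pmf p"
    "map_pmf snd (jrr_pair_pmf p \<rho>) = bernoulli_pmf p"
proof -
  have e1: "\<And>b. fst -` {b} = {(b,True),(b,False)}" by auto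
  have e2: "\<And>b. snd -` {b} = {(True,b),(False,b)}" by auto
  show "map_pmf fst (jrr_pair_pmf p \<rho>) = bernoulli_pmf p"
    apply (rule pmf_eqI)
    subgoal for b
    apply (simp add: pmf_map e1 measure_measure_pmf_finite pair_pmf_pmf[OF assms])
      using assms by (cases b) (auto simp: power2_eq_square algebra_simps)
    done
  show "map_pmf snd (jrr_pair_pmf p \<rho>) = bernoulli_pmf p"
    apply (rule pmf_eqI)
    subgoal for b
    apply (simp add: pmf_map e2 measure_measure_pmf_finite pair_pmf_pmf[OF assms])
      using assms by (cases b) (auto simp: power2_eq_square algebra_simps)
    done
qed

lemma pp_finite: "finite (pair_partitions n)"
proof (rule finite_subset)
  show "pair_partitions n \<subseteq> Pow (Pow {..<n})" unfolding pair_partitions_def by auto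
qed simp

lemma pp_M_finite: "M \<in> pair_partitions n \<Longrightarrow> finite M"
  by (rule finite_subset[of _ "Pow {..<n}"]) (auto simp: pair_partitions_def)

lemma pp_nonempty:
  assumes "even n"
  shows "pair_partitions n \<noteq> {}"
proof -
  obtain k where k: "n = 2*k" using assms by (elim evenE)
  define M where "M = (\<lambda>i. {2*i, 2*i+1}) ` {..<k}"
  have u: "\<Union>M = {..<n}"
  proof
    show "\<Union>M \<subseteq> {..<n}" unfolding M_def k by auto
    show "{..<n} \<subseteq> \<Union>M"
    proof
      fix j assume "j \<in> {..<n}"
      then have 1: "j div 2 < k" using k by simp
      have 2: "j = 2*(j div 2) \<or> j = 2*(j div 2)+1" by presburger
      from 1 2 show "j \<in> \<Union>M" unfolding M_def by blast
    qed
  qed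
  have c: "\<forall>g\<in>M. card g = 2" unfolding M_def by auto
  have d: "\<forall>g\<in>M. \<forall>h\<in>M. g \<noteq> h \<longrightarrow> g \<inter> h = {}"
    unfolding M_def by auto presburger+
  have "M \<in> pair_partitions n" using u c d unfolding pair_partitions_def mem_Collect_eq by (intro conjI)
  thus ?thesis by blast
qed

lemma pp_group:
  assumes "M \<in> pair_partitions n" "j < n"
  shows "group_of M j \<in> M \<and> j \<in> group_of M j"
proof -
  have P: "\<Union>M = {..<n} \<and> (\<forall>g\<in>M. card g = 2) \<and> (\<forall>g\<in>M. \<forall>h\<in>M. g \<noteq> h \<longrightarrow> g \<inter> h = {})"
    using assms(1) unfolding pair_partitions_def mem_Collect_eq .
  have U: "\<Union>M = {..<n}" using P by (rule conjunct1)
  have D: "\<forall>g\<in>M. \<forall>h\<in>M. g \<noteq> h \<longrightarrow> g \<inter> h = {}" using P[THEN conjunct2, THEN conjunct2] .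
  have "j \<in> \<Union>M" using U assms(2) by simp
  then obtain g where g: "g \<in> M" "j \<in> g" by (elim UnionE)
  have un: "h = g" if "h \<in> M \<and> j \<in> h" for h
  proof (rule ccontr)
    assume "h \<noteq> g"
    then have "h \<inter> g = {}" using D that g by blast
    then show False using that g by blast
  qed
  have "(THE g. g \<in> M \<and> j \<in> g) = g"
    by (rule the_equality) (use g un in blast)+
  then show ?thesis unfolding group_of_def using g by simp
qed

lemma T_marg:
  assumes "even n" "1/2 < p" "p \<le> 1" "1 - 1/p \<le> \<rho>" "\<rho> \<le> 1" "j < n"
  shows "map_pmf (\<lambda>T. T j) (jrr_T n p \<rho>) = bernoulli_pmf p"
proof -
  have set: "set_pmf (pmf_of_set (pair_partitions n)) = pair_partitions n"
    using pp_finite pp_nonempty[OF assms(1)] by simp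
  have "map_pmf (\<lambda>T. T j) (jrr_T n p \<rho>) =
     bind_pmf (pmf_of_set (pair_partitions n)) (\<lambda>M. map_pmf (\<lambda>G. let g = group_of M j in
                            if j = Min g then fst (G g) else snd (G g))
         (Pi_pmf M (False, False) (\<lambda>_. jrr_pair_pmf p \<rho>)))"
    unfolding jrr_T_def map_pmf_def by (simp add: bind_assoc_pmf bind_return_pmf)
  also have "\<dots> = bind_pmf (pmf_of_set (pair_partitions n)) (\<lambda>M. bernoulli_pmf p)"
  proof (rule bind_pmf_cong[OF refl])
    fix M assume "M \<in> set_pmf (pmf_of_set (pair_partitions n))"
    hence M: "M \<in> pair_partitions n" using set by simp
    define g where "g = group_of M j"
    have g: "g \<in> M" using pp_group[OF M assms(6)] g_def by simp
    have "map_pmf (\<lambda>G. let g = group_of M j in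
                            if j = Min g then fst (G g) else snd (G g))
         (Pi_pmf M (False, False) (\<lambda>_. jrr_pair_pmf p \<rho>)) =
         map_pmf (\<lambda>z. if j = Min g then fst z else snd z)
           (map_pmf (\<lambda>G. G g) (Pi_pmf M (False, False) (\<lambda>_. jrr_pair_pmf p \<rho>)))"
      by (simp add: map_pmf_comp g_def Let_def)
    also have "\<dots> = map_pmf (\<lambda>z. if j = Min g then fst z else snd z) (jrr_pair_pmf p \<rho>)"
      using Pi_pmf_component[OF pp_M_finite[OF M], of g "(False, False)"] g by simp
    also have "\<dots> = bernoulli_pmf p"
      using pair_marg[OF assms(2-5)] by (cases "j = Min g") (simp_all add: if_distrib)
    finally show "map_pmf (\<lambda>G. let g = group_of M j in
                            if j = Min g then fst (G g) else snd (G g))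
         (Pi_pmf M (False, False) (\<lambda>_. jrr_pair_pmf p \<rho>)) = bernoulli_pmf p" .
  qed
  also have "\<dots> = bernoulli_pmf p" by simp
  finally show ?thesis .
qed


theorem theorem1:
  fixes n :: nat and p q \<rho> :: real and x :: "nat \<Rightarrow> nat" and v :: nat
  assumes "even n"
    and "1/2 < p" and "p \<le> 1" and "q = 1 - p"
    and "1 - 1/p \<le> \<rho>" and "\<rho> \<le> 1"
    and "\<forall>j<n. x j \<in> {0, 1}"
    and "v \<in> {0, 1}"
  shows "measure_pmf.expectation (jrr_T n p \<rho>)
           (\<lambda>T. (real (card {j \<in> {..<n}. jrr_report x T j = v}) - real n * q) / (p - q))
         = real (card {j \<in> {..<n}. x j = v})"
proof -
  have p0: "0 \<le> p" using assms by simp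
  have pq: "p - q > 0" using assms by simp
  define h where "h = (\<lambda>j b. if (if b then x j else 1 - x j) = v then 1 else (0::real))"
  have card_eq: "real (card {j \<in> {..<n}. jrr_report x T j = v}) = (\<Sum>j<n. h j (T j))" for T
  proof -
    have "real (card {j \<in> {..<n}. jrr_report x T j = v}) = (\<Sum>j\<in>{j \<in> {..<n}. jrr_report x T j = v}. 1)"
      by simp
    also have "\<dots> = (\<Sum>j<n. if jrr_report x T j = v then 1 else 0)"
      by (rule sum.inter_filter) simp
    finally show ?thesis by (simp add: h_def jrr_report_def)
  qed
  have intg: "integrable (measure_pmf (jrr_T n p \<rho>)) (\<lambda>T. h j (T j))" for j
    by (rule measure_pmf.integrable_const_bound[where B=1]) (auto simp: h_def)
  have ej: "measure_pmf.expectation (jrr_T n p \<rho>) (\<lambda>T. h j (T j))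
      = (if x j = v then 1 else 0) * (p - q) + q" if j: "j < n" for j
  proof -
    have "measure_pmf.expectation (jrr_T n p \<rho>) (\<lambda>T. h j (T j))
       = measure_pmf.expectation (map_pmf (\<lambda>T. T j) (jrr_T n p \<rho>)) (h j)" by simp
    also have "\<dots> = h j True * p + h j False * (1 - p)"
      using T_marg[OF assms(1,2,3,5,6) j] assms by simp
    also have "\<dots> = (if x j = v then 1 else 0) * (p - q) + q"
      using assms j by (auto simp: h_def)
    finally show ?thesis .
  qed
  have "measure_pmf.expectation (jrr_T n p \<rho>)
           (\<lambda>T. (real (card {j \<in> {..<n}. jrr_report x T j = v}) - real n * q) / (p - q))
      = (measure_pmf.expectation (jrr_T n p \<rho>) (\<lambda>T. (\<Sum>j<n. h j (T j))) - real n * q) / (p - q)"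
    unfolding card_eq
    by (simp add: integral_diff integrable_sum intg)
  also have "measure_pmf.expectation (jrr_T n p \<rho>) (\<lambda>T. (\<Sum>j<n. h j (T j)))
     = (\<Sum>j<n. (if x j = v then 1 else 0) * (p - q) + q)"
    by (simp add: integral_sum intg ej)
  also have "\<dots> = real (card {j \<in> {..<n}. x j = v}) * (p - q) + real n * q"
    by (simp add: sum.distrib sum_distrib_right[symmetric] sum.inter_filter[symmetric])
  finally show ?thesis using pq by (simp add: field_simps)
qed

end
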